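(* Let $f:\Gamma\to\Gamma$ be an irreducible, expanding graph map with stacks $\mathcal{K}_1,\dots,\mathcal{K}_p$ and final edges $\alpha_1,\dots,\alpha_p$. If there is a directed path $P$ in the stack graph $\mathcal{SG}(f)$ from $\mathcal{K}_i$ to $\mathcal{K}_j$ with $s(P)=d$, then $f^d(\alpha_i)$ traverses $\alpha_j$.
   Context: A graph $\Gamma$ is a finite 1-dimensional CW complex with a chosen orientation on each edge; $\mathcal{E}\Gamma$ is its set of edges, $\bar e$ is the reverse of $e$, $\iota,\tau$ the endpoints. An edge path is a nonempty concatenation $u=e_1\cdots e_k$ of oriented edges with $\tau(e_i)=\iota(e_{i+1})$; $|u|=k$ (no cancellation); $u$ traverses $e$ if $e$ or $\bar e$ occurs in it. A graph map $f:\Gamma\to\Gamma$ assigns to vertices vertices and to each oriented edge $e$ an edge path $f(e)$ with $\iota(f(e))=f(\iota(e))$, $f(\bar e)=\overline{f(e)}$; powers $f^d$ are compositions, applied to paths by concatenation without tightening. $T(f)$ has $(i,j)$ entry the number of times $f(e_i)$ traverses $e_j$; $f$ is irreducible if $T(f)$ is irreducible and every vertex has valence $\ge3$; expanding if $|f^n(e)|\to\infty$ for every edge. Stacks: $e$ is mixing if $|f(e)|>1$; surplus if non-mixing and $f(e)\in\{f(u),\overline{f(u)}\}$ for some edge $u\notin\{e,\bar e\}$. Stacks are the classes of the equivalence relation on $\mathcal{E}\Gamma$ (unoriented edges) generated by $e\sim f(e)$ for $e$ non-mixing and non-surplus. Each stack has the form $\mathcal{K}=\{e,f(e),\dots,f^s(e)\}$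 with only $f^s(e)$ mixing or surplus; $f^s(e)$ is the final edge of $\mathcal{K}$. Let $\alpha_i$ be the final edge of $\mathcal{K}_i$. The stack graph $\mathcal{SG}(f)$ is the directed graph with vertex set $\{\mathcal{K}_1,\dots,\mathcal{K}_p\}$ and a directed edge $[\mathcal{K}_i,\mathcal{K}_j]$ whenever $f(\alpha_i)$ contains an edge of $\mathcal{K}_j$. The length of such an edge is $s([\mathcal{K}_i,\mathcal{K}_j])=\min\{s\ge1: f^s(\alpha_i)\text{ traverses }\alpha_j\}$. For a directed path $P=E_1\cdots E_k$ (traversing edges only in their positive direction), $s(P)=\sum_i s(E_i)$. *)

theory Defs
  imports Main
begin

text \<open>A graph: vertex set V, set E of (positively oriented) edges, endpoint maps src, tgt.
  An oriented edge is a pair (e, b): (e, True) is e, (e, False) is its reverse.\<close>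

type_synonym 'e oedge = "'e \<times> bool"

fun oinit :: "('e \<Rightarrow> 'v) \<Rightarrow> ('e \<Rightarrow> 'v) \<Rightarrow> 'e oedge \<Rightarrow> 'v" where
  "oinit src tgt (e, b) = (if b then src e else tgt e)"

fun oterm :: "('e \<Rightarrow> 'v) \<Rightarrow> ('e \<Rightarrow> 'v) \<Rightarrow> 'e oedge \<Rightarrow> 'v" where
  "oterm src tgt (e, b) = (if b then tgt e else src e)"

fun orev :: "'e oedge \<Rightarrow> 'e oedge" where
  "orev (e, b) = (e, \<not> b)"

definition rev_path :: "'e oedge list \<Rightarrow> 'e oedge list" where
  "rev_path u = rev (map orev u)"

definition is_edge_path :: "'e set \<Rightarrow> ('e \<Rightarrow> 'v) \<Rightarrow> ('e \<Rightarrow> 'v) \<Rightarrow> 'e oedge list \<Rightarrow> bool" where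
  "is_edge_path E src tgt u \<longleftrightarrow> u \<noteq> [] \<and> (\<forall>x\<in>set u. fst x \<in> E) \<and>
     (\<forall>i. i + 1 < length u \<longrightarrow> oterm src tgt (u ! i) = oinit src tgt (u ! (i + 1)))"

definition traverses :: "'e oedge list \<Rightarrow> 'e \<Rightarrow> bool" where
  "traverses u e \<longleftrightarrow> e \<in> fst ` set u"

text \<open>A graph map is given by a vertex map fv and the images fe e of positively oriented edges;
  f(\<bar>e) is the reverse path of f(e).\<close>
definition graph_map :: "'v set \<Rightarrow> 'e set \<Rightarrow> ('e \<Rightarrow> 'v) \<Rightarrow> ('e \<Rightarrow> 'v) \<Rightarrow> ('v \<Rightarrow> 'v)
    \<Rightarrow> ('e \<Rightarrow> 'e oedge list) \<Rightarrow> bool" where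
  "graph_map V E src tgt fv fe \<longleftrightarrow> finite V \<and> finite E \<and> src ` E \<subseteq> V \<and> tgt ` E \<subseteq> V \<and>
     fv ` V \<subseteq> V \<and>
     (\<forall>e\<in>E. is_edge_path E src tgt (fe e) \<and> oinit src tgt (hd (fe e)) = fv (src e)
            \<and> oterm src tgt (last (fe e)) = fv (tgt e))"

fun omap :: "('e \<Rightarrow> 'e oedge list) \<Rightarrow> 'e oedge \<Rightarrow> 'e oedge list" where
  "omap fe (e, b) = (if b then fe e else rev_path (fe e))"

text \<open>image of a path (concatenation, no tightening) and powers f^n\<close>
definition fpath :: "('e \<Rightarrow> 'e oedge list) \<Rightarrow> 'e oedge list \<Rightarrow> 'e oedge list" where
  "fpath fe u = concat (map (omap fe) u)"

definition fpow :: "('e \<Rightarrow> 'e oedge list) \<Rightarrow> nat \<Rightarrow> 'e oedge \<Rightarrow> 'e oedge list" where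
  "fpow fe n x = (fpath fe ^^ n) [x]"

definition tmat :: "('e \<Rightarrow> 'e oedge list) \<Rightarrow> 'e \<Rightarrow> 'e \<Rightarrow> nat" where
  "tmat fe e e' = length (filter (\<lambda>x. fst x = e') (fe e))"

fun tmat_pow :: "'e set \<Rightarrow> ('e \<Rightarrow> 'e oedge list) \<Rightarrow> nat \<Rightarrow> 'e \<Rightarrow> 'e \<Rightarrow> nat" where
  "tmat_pow E fe 0 i j = (if i = j then 1 else 0)"
| "tmat_pow E fe (Suc n) i j = (\<Sum>k\<in>E. tmat_pow E fe n i k * tmat fe k j)"

definition irreducible_matrix :: "'e set \<Rightarrow> ('e \<Rightarrow> 'e oedge list) \<Rightarrow> bool" where
  "irreducible_matrix E fe \<longleftrightarrow> (\<forall>i\<in>E. \<forall>j\<in>E. \<exists>n>0. tmat_pow E fe n i j > 0)"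

text \<open>valence: number of oriented edges starting at v (loops count twice)\<close>
definition valence :: "'e set \<Rightarrow> ('e \<Rightarrow> 'v) \<Rightarrow> ('e \<Rightarrow> 'v) \<Rightarrow> 'v \<Rightarrow> nat" where
  "valence E src tgt v = card {e\<in>E. src e = v} + card {e\<in>E. tgt e = v}"

definition irreducible_map :: "'v set \<Rightarrow> 'e set \<Rightarrow> ('e \<Rightarrow> 'v) \<Rightarrow> ('e \<Rightarrow> 'v)
    \<Rightarrow> ('e \<Rightarrow> 'e oedge list) \<Rightarrow> bool" where
  "irreducible_map V E src tgt fe \<longleftrightarrow> irreducible_matrix E fe \<and> (\<forall>v\<in>V. valence E src tgt v \<ge> 3)"

definition expanding :: "'e set \<Rightarrow> ('e \<Rightarrow> 'e oedge list) \<Rightarrow> bool" where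
  "expanding E fe \<longleftrightarrow> (\<forall>e\<in>E. \<forall>M. \<exists>N. \<forall>n\<ge>N. length (fpow fe n (e, True)) \<ge> M)"

definition mixing :: "('e \<Rightarrow> 'e oedge list) \<Rightarrow> 'e \<Rightarrow> bool" where
  "mixing fe e \<longleftrightarrow> length (fe e) > 1"

definition surplus :: "'e set \<Rightarrow> ('e \<Rightarrow> 'e oedge list) \<Rightarrow> 'e \<Rightarrow> bool" where
  "surplus E fe e \<longleftrightarrow> \<not> mixing fe e \<and>
     (\<exists>u\<in>E. u \<noteq> e \<and> (fe e = fe u \<or> fe e = rev_path (fe u)))"

text \<open>generating relation e ~ f(e) for non-mixing, non-surplus e, and its equivalence closure on E\<close>
definition stack_step :: "'e set \<Rightarrow> ('e \<Rightarrow> 'e oedge list) \<Rightarrow> ('e \<times> 'e) set" where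
  "stack_step E fe = {(e, fst (hd (fe e))) | e. e \<in> E \<and> \<not> mixing fe e \<and> \<not> surplus E fe e}"

definition stack_equiv :: "'e set \<Rightarrow> ('e \<Rightarrow> 'e oedge list) \<Rightarrow> ('e \<times> 'e) set" where
  "stack_equiv E fe = Id_on E \<union> (stack_step E fe \<union> (stack_step E fe)\<inverse>)\<^sup>+"

definition stacks :: "'e set \<Rightarrow> ('e \<Rightarrow> 'e oedge list) \<Rightarrow> 'e set set" where
  "stacks E fe = E // stack_equiv E fe"

definition final_edge :: "'e set \<Rightarrow> ('e \<Rightarrow> 'e oedge list) \<Rightarrow> 'e set \<Rightarrow> 'e" where
  "final_edge E fe K = (THE a. a \<in> K \<and> (mixing fe a \<or> surplus E fe a))"

definition sg_edge :: "'e set \<Rightarrow> ('e \<Rightarrow> 'e oedge list) \<Rightarrow> 'e set \<Rightarrow> 'e set \<Rightarrow> bool" where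
  "sg_edge E fe K L \<longleftrightarrow> K \<in> stacks E fe \<and> L \<in> stacks E fe \<and>
     (\<exists>x\<in>set (fe (final_edge E fe K)). fst x \<in> L)"

definition sg_len :: "'e set \<Rightarrow> ('e \<Rightarrow> 'e oedge list) \<Rightarrow> 'e set \<Rightarrow> 'e set \<Rightarrow> nat" where
  "sg_len E fe K L = (LEAST s. s \<ge> 1 \<and>
      traverses (fpow fe s (final_edge E fe K, True)) (final_edge E fe L))"

text \<open>a directed path E_1...E_k (k >= 1) in the stack graph, given by its vertex sequence
  K_0, ..., K_k (edges of the stack graph are determined by their endpoints)\<close>
definition sg_path :: "'e set \<Rightarrow> ('e \<Rightarrow> 'e oedge list) \<Rightarrow> 'e set list \<Rightarrow> bool" where
  "sg_path E fe Ks \<longleftrightarrow> length Ks \<ge> 2 \<and>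
     (\<forall>i. i + 1 < length Ks \<longrightarrow> sg_edge E fe (Ks ! i) (Ks ! (i + 1)))"

definition sg_path_len :: "'e set \<Rightarrow> ('e \<Rightarrow> 'e oedge list) \<Rightarrow> 'e set list \<Rightarrow> nat" where
  "sg_path_len E fe Ks = (\<Sum>i<length Ks - 1. sg_len E fe (Ks ! i) (Ks ! (i + 1)))"

end

theory Submission
  imports Defs
begin

definition edgesF :: "('e \<Rightarrow> 'e oedge list) \<Rightarrow> 'e set \<Rightarrow> 'e set" where
  "edgesF fe A = (\<Union>e\<in>A. fst ` set (fe e))"

lemma edges_omap: "fst ` set (omap fe y) = fst ` set (fe (fst y))"
  by (cases y) (force simp: rev_path_def image_image)

lemma edges_fpath: "fst ` set (fpath fe u) = edgesF fe (fst ` set u)"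
  unfolding fpath_def edgesF_def
  by (auto simp: edges_omap[symmetric] image_UN) 

lemma edges_pow: "fst ` set ((fpath fe ^^ n) u) = (edgesF fe ^^ n) (fst ` set u)"
  by (induction n) (auto simp: edges_fpath)

lemma mono_pow: "A \<subseteq> B \<Longrightarrow> (edgesF fe ^^ n) A \<subseteq> (edgesF fe ^^ n) B"
proof (induction n)
  case 0 then show ?case by simp
next
  case (Suc n)
  have "edgesF fe ((edgesF fe ^^ n) A) \<subseteq> edgesF fe ((edgesF fe ^^ n) B)"
    using Suc unfolding edgesF_def by blast
  then show ?case by simp
qed

lemma traverses_fpow: "traverses (fpow fe n (a,b)) c \<longleftrightarrow> c \<in> (edgesF fe ^^ n) {a}"
  unfolding traverses_def fpow_def edges_pow by simp

lemma gm_paths: assumes "graph_map V E src tgt fv fe" "e \<in> E"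
  shows "fe e \<noteq> [] \<and> fst ` set (fe e) \<subseteq> E"
  using assms unfolding graph_map_def is_edge_path_def by auto

lemma S_shape: assumes "graph_map V E src tgt fv fe" "(x,y) \<in> stack_step E fe"
  shows "x \<in> E \<and> y \<in> E \<and> (\<exists>c. fe x = [(y,c)])"
proof -
  from assms(2) have x: "x \<in> E" "\<not> mixing fe x" "y = fst (hd (fe x))"
    unfolding stack_step_def by auto
  from gm_paths[OF assms(1) x(1)] have ne: "fe x \<noteq> []" and sub: "fst ` set (fe x) \<subseteq> E" by auto
  from x(2) ne have "length (fe x) = 1" unfolding mixing_def
    by (metis One_nat_def Suc_lessI length_greater_0_conv)
  then obtain h where h: "fe x = [h]" by (metis One_nat_def length_0_conv length_Suc_conv)
  show ?thesis using x h sub by (cases h) auto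
qed

lemma S_sv: assumes "graph_map V E src tgt fv fe"
  shows "single_valued (stack_step E fe)"
  unfolding single_valued_def stack_step_def by auto

lemma relpow_edges: "(x,z) \<in> (stack_step E fe ^^ m) \<Longrightarrow> graph_map V E src tgt fv fe
  \<Longrightarrow> z \<in> (edgesF fe ^^ m) {x}"
proof (induction m arbitrary: z)
  case 0 then show ?case by simp
next
  case (Suc m)
  from Suc.prems(1) obtain y where y: "(x,y) \<in> stack_step E fe ^^ m" "(y,z) \<in> stack_step E fe"
    by (rule relpow_Suc_E)
  from S_shape[OF Suc.prems(2) y(2)] obtain c where "fe y = [(z,c)]" by auto
  then have "z \<in> edgesF fe {y}" by (simp add: edgesF_def)
  moreover have "edgesF fe {y} \<subseteq> edgesF fe ((edgesF fe ^^ m) {x})"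
    using Suc.IH[OF y(1) Suc.prems(2)] unfolding edgesF_def by blast
  ultimately show ?case by auto
qed

lemma relpow_len: "(x,z) \<in> (stack_step E fe ^^ m) \<Longrightarrow> graph_map V E src tgt fv fe
  \<Longrightarrow> \<exists>b'. fpow fe m (x,b) = [(z,b')]"
proof (induction m arbitrary: x b)
  case 0 then show ?case by (simp add: fpow_def)
next
  case (Suc m)
  from relpow_Suc_D2[OF Suc.prems(1)] obtain y where
    y: "(x,y) \<in> stack_step E fe" "(y,z) \<in> stack_step E fe ^^ m" by blast
  from S_shape[OF Suc.prems(2) y(1)] obtain c where c: "fe x = [(y,c)]" by auto
  have "fpath fe [(x,b)] = [(y, if b then c else \<not> c)]"
    using c by (simp add: fpath_def rev_path_def)
  then have "fpow fe (Suc m) (x,b) = fpow fe m (y, if b then c else \<not> c)"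
    by (simp add: fpow_def funpow_Suc_right del: funpow.simps)
  then show ?case using Suc.IH[OF y(2) Suc.prems(2)] by simp
qed

lemma common_desc:
  assumes sv: "single_valued S" and ab: "(a,b) \<in> (S \<union> S\<inverse>)\<^sup>*"
  shows "\<exists>m n w. (a,w) \<in> S ^^ m \<and> (b,w) \<in> S ^^ n"
  using ab
proof (induction rule: rtrancl_induct)
  case base then show ?case by (metis relpow_0_I)
next
  case (step b c)
  then obtain m n w where mw: "(a,w) \<in> S ^^ m" and nw: "(b,w) \<in> S ^^ n" by blast
  from step.hyps(2) show ?case
  proof
    assume bc: "(b,c) \<in> S"
    show ?thesis
    proof (cases n)
      case 0
      then have "w = b" using nw by simp
      then have "(a,c) \<in> S ^^ Suc m" using mw bc by (metis relpow_Suc_I)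
      then show ?thesis by (metis relpow_0_I)
    next
      case (Suc k)
      from relpow_Suc_D2[OF nw[unfolded Suc]] obtain y where "(b,y) \<in> S" "(y,w) \<in> S ^^ k" by blast
      with bc sv have "(c,w) \<in> S ^^ k" by (metis single_valued_def)
      then show ?thesis using mw by blast
    qed
  next
    assume "(b,c) \<in> S\<inverse>"
    then have "(c,b) \<in> S" by simp
    then have "(c,w) \<in> S ^^ Suc n" using nw by (metis relpow_Suc_I2)
    then show ?thesis using mw by blast
  qed
qed

lemma term_desc: "(a,w) \<in> S ^^ m \<Longrightarrow> \<not> (\<exists>y. (a,y) \<in> S) \<Longrightarrow> w = a"
proof (cases m)
  case (Suc k)
  assume "(a,w) \<in> S ^^ m" "\<not> (\<exists>y. (a,y) \<in> S)"
  then show ?thesis using Suc relpow_Suc_D2 by metis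
qed simp

lemma R_sub: "stack_equiv E fe \<subseteq> (stack_step E fe \<union> (stack_step E fe)\<inverse>)\<^sup>*"
  unfolding stack_equiv_def by (auto simp: Id_on_def)

lemma R_E: assumes "graph_map V E src tgt fv fe" shows "stack_equiv E fe \<subseteq> E \<times> E"
proof -
  have "stack_step E fe \<union> (stack_step E fe)\<inverse> \<subseteq> E \<times> E"
    using S_shape[OF assms] by fast
  then have "(stack_step E fe \<union> (stack_step E fe)\<inverse>)\<^sup>+ \<subseteq> E \<times> E"
    by (metis trancl_subset_Sigma)
  then show ?thesis unfolding stack_equiv_def by auto
qed

lemma uniq_term:
  assumes gm: "graph_map V E src tgt fv fe" and K: "K \<in> stacks E fe"
    and a1: "a1 \<in> K" "\<not> (\<exists>y. (a1,y) \<in> stack_step E fe)"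
    and a2: "a2 \<in> K" "\<not> (\<exists>y. (a2,y) \<in> stack_step E fe)"
  shows "a1 = a2"
proof -
  let ?S = "stack_step E fe"
  let ?T = "?S \<union> ?S\<inverse>"
  from K obtain a where K': "K = stack_equiv E fe `` {a}" unfolding stacks_def quotient_def by auto
  have "(a,a1) \<in> ?T\<^sup>*" "(a,a2) \<in> ?T\<^sup>*" using a1 a2 K' R_sub[of E fe] by auto
  moreover have "sym (?T\<^sup>*)" by (rule sym_rtrancl) (auto simp: sym_def)
  ultimately have "(a1,a2) \<in> ?T\<^sup>*" by (meson rtrancl_trans symD)
  from common_desc[OF S_sv[OF gm] this] obtain m n w where
    "(a1,w) \<in> ?S ^^ m" "(a2,w) \<in> ?S ^^ n" by blast
  then show ?thesis using term_desc a1(2) a2(2) by metis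
qed

lemma mix_term: "mixing fe a \<or> surplus E fe a \<Longrightarrow> \<not> (\<exists>y. (a,y) \<in> stack_step E fe)"
  unfolding stack_step_def by auto

lemma term_mix: "a \<in> E \<Longrightarrow> \<not> (\<exists>y. (a,y) \<in> stack_step E fe) \<Longrightarrow> mixing fe a \<or> surplus E fe a"
  unfolding stack_step_def by auto

lemma final_eq:
  assumes gm: "graph_map V E src tgt fv fe" and K: "K \<in> stacks E fe"
    and z: "z \<in> K" "mixing fe z \<or> surplus E fe z"
  shows "final_edge E fe K = z"
  unfolding final_edge_def
proof (rule the_equality)
  show "z \<in> K \<and> (mixing fe z \<or> surplus E fe z)" using z by simp
next
  fix a assume "a \<in> K \<and> (mixing fe a \<or> surplus E fe a)"
  then show "a = z" using uniq_term[OF gm K] z mix_term by metis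
qed

lemma reach:
  assumes gm: "graph_map V E src tgt fv fe" and ex: "expanding E fe" and x: "x \<in> E"
  shows "\<exists>m z. (x,z) \<in> stack_step E fe ^^ m \<and> \<not> (\<exists>y. (z,y) \<in> stack_step E fe)"
proof (rule ccontr)
  let ?S = "stack_step E fe"
  assume "\<not> ?thesis"
  then have H: "\<And>m z. (x,z) \<in> ?S ^^ m \<Longrightarrow> \<exists>y. (z,y) \<in> ?S" by blast
  have all: "\<exists>z. (x,z) \<in> ?S ^^ m" for m
  proof (induction m)
    case 0 then show ?case by (metis relpow_0_I)
  next
    case (Suc m) then obtain z where "(x,z) \<in> ?S ^^ m" by blast
    with H obtain y where "(z,y) \<in> ?S" by blast
    then show ?case using \<open>(x,z) \<in> ?S ^^ m\<close> by (metis relpow_Suc_I)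
  qed
  have len: "length (fpow fe m (x,True)) = 1" for m
  proof -
    obtain z where "(x,z) \<in> stack_step E fe ^^ m" using all[of m] by blast
    from relpow_len[OF this gm, of True] show ?thesis by auto
  qed
  from ex x obtain N where "\<forall>n\<ge>N. length (fpow fe n (x, True)) \<ge> 2"
    unfolding expanding_def by blast
  then show False using len[of N] by auto
qed

lemma in_class:
  assumes gm: "graph_map V E src tgt fv fe" and K: "K \<in> stacks E fe"
    and x: "x \<in> K" and xz: "(x,z) \<in> stack_step E fe ^^ m"
  shows "z \<in> K"
proof -
  let ?S = "stack_step E fe"
  let ?T = "?S \<union> ?S\<inverse>"
  from K obtain a where K': "K = stack_equiv E fe `` {a}" "a \<in> E"
    unfolding stacks_def quotient_def by auto
  have ax: "(a,x) \<in> stack_equiv E fe" using x K' by auto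
  have "(x,z) \<in> ?S\<^sup>*" using xz relpow_imp_rtrancl by blast
  then have xzT: "(x,z) \<in> ?T\<^sup>*" by (meson in_rtrancl_UnI)
  show ?thesis
  proof (cases "x = z")
    case True then show ?thesis using x by simp
  next
    case False
    then have xz': "(x,z) \<in> ?T\<^sup>+" using xzT by (meson rtranclD)
    from ax have "(a,z) \<in> ?T\<^sup>+"
      unfolding stack_equiv_def using xz' by (auto simp: Id_on_def)
    then show ?thesis using K' unfolding stack_equiv_def by auto
  qed
qed

lemma edge_exists:
  assumes gm: "graph_map V E src tgt fv fe" and ex: "expanding E fe"
    and KL: "sg_edge E fe K L"
  shows "\<exists>s. s \<ge> 1 \<and> traverses (fpow fe s (final_edge E fe K, True)) (final_edge E fe L)"
proof -
  from KL obtain x where K: "K \<in> stacks E fe" and L: "L \<in> stacks E fe"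
    and x: "x \<in> set (fe (final_edge E fe K))" "fst x \<in> L"
    unfolding sg_edge_def by blast
  have LE: "L \<subseteq> E" using L R_E[OF gm] unfolding stacks_def quotient_def by auto
  with x have xE: "fst x \<in> E" by auto
  from reach[OF gm ex xE] obtain m z where mz: "(fst x, z) \<in> stack_step E fe ^^ m"
    and zt: "\<not> (\<exists>y. (z,y) \<in> stack_step E fe)" by blast
  have zL: "z \<in> L" using in_class[OF gm L x(2) mz] .
  with LE have "z \<in> E" by auto
  with zt have "mixing fe z \<or> surplus E fe z" by (rule term_mix[rotated])
  with zL have fz: "final_edge E fe L = z" using final_eq[OF gm L] by blast
  have "fst x \<in> edgesF fe {final_edge E fe K}" using x(1) by (auto simp: edgesF_def)
  then have "(edgesF fe ^^ m) {fst x} \<subseteq> (edgesF fe ^^ m) (edgesF fe {final_edge E fe K})"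
    by (intro mono_pow) auto
  moreover have "z \<in> (edgesF fe ^^ m) {fst x}" using relpow_edges[OF mz gm] .
  ultimately have "z \<in> (edgesF fe ^^ Suc m) {final_edge E fe K}"
    by (auto simp: funpow_Suc_right simp del: funpow.simps)
  then show ?thesis using fz traverses_fpow by (metis le_add1 plus_1_eq_Suc)
qed

theorem lemma4p5:
  fixes V :: "'v set" and E :: "'e set" and src tgt :: "'e \<Rightarrow> 'v"
    and fv :: "'v \<Rightarrow> 'v" and fe :: "'e \<Rightarrow> 'e oedge list"
    and Ks :: "'e set list" and d :: nat
  assumes "graph_map V E src tgt fv fe"
    and "irreducible_map V E src tgt fe"
    and "expanding E fe"
    and "sg_path E fe Ks"
    and "sg_path_len E fe Ks = d"
  shows "traverses (fpow fe d (final_edge E fe (hd Ks), True)) (final_edge E fe (last Ks))"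
proof -
  let ?a = "\<lambda>i. final_edge E fe (Ks ! i)"
  let ?s = "\<lambda>i. sg_len E fe (Ks ! i) (Ks ! (i + 1))"
  have step: "?a (Suc i) \<in> (edgesF fe ^^ ?s i) {?a i}" if "i + 1 < length Ks" for i
  proof -
    have "sg_edge E fe (Ks ! i) (Ks ! (i + 1))" using assms(4) that unfolding sg_path_def by blast
    from edge_exists[OF assms(1) assms(3) this] have
      "?s i \<ge> 1 \<and> traverses (fpow fe (?s i) (?a i, True)) (?a (i+1))"
      unfolding sg_len_def by (rule LeastI_ex)
    then show ?thesis using traverses_fpow by (metis Suc_eq_plus1)
  qed
  have main: "n < length Ks \<Longrightarrow> ?a n \<in> (edgesF fe ^^ (\<Sum>i<n. ?s i)) {?a 0}" for n
  proof (induction n)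
    case 0 then show ?case by simp
  next
    case (Suc n)
    then have IH: "?a n \<in> (edgesF fe ^^ (\<Sum>i<n. ?s i)) {?a 0}" by simp
    have "(edgesF fe ^^ ?s n) {?a n} \<subseteq> (edgesF fe ^^ ?s n) ((edgesF fe ^^ (\<Sum>i<n. ?s i)) {?a 0})"
      using IH by (intro mono_pow) auto
    moreover have "(edgesF fe ^^ ?s n) ((edgesF fe ^^ (\<Sum>i<n. ?s i)) {?a 0})
       = (edgesF fe ^^ (\<Sum>i<Suc n. ?s i)) {?a 0}"
      by (simp add: funpow_add add.commute)
    ultimately show ?case using step[of n] Suc.prems by auto
  qed
  have len: "length Ks \<ge> 2" using assms(4) unfolding sg_path_def by simp
  then have "hd Ks = Ks ! 0" "last Ks = Ks ! (length Ks - 1)"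
  proof -
    have "Ks \<noteq> []" using len by auto
    then show "hd Ks = Ks ! 0" "last Ks = Ks ! (length Ks - 1)"
      by (simp_all add: hd_conv_nth last_conv_nth)
  qed
  moreover have "?a (length Ks - 1) \<in> (edgesF fe ^^ d) {?a 0}"
    using main[of "length Ks - 1"] len assms(5) unfolding sg_path_len_def by simp
  ultimately show ?thesis using traverses_fpow by metis
qed

end
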